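(* The set $\mathcal U\setminus(A_1\cup A_2\cup A_3)$ has four connected components $\mathcal U_0,\mathcal U_1,\mathcal U_2,\mathcal U_3$ ($\mathcal U_0$ the central triangle with vertices $a_1,a_2,a_3$, and $\mathcal U_i$ the region bounded by $A_i$ and $Q$), and $f$ maps each $\mathcal U_j$ homeomorphically onto $\mathcal U$.
   Context: $f=g\circ h$ with $g[x_1:x_2:x_3]=[x_1^2:x_2^2:x_3^2]$ and $h[x_1:x_2:x_3]=[x_1(-x_1+x_2+x_3):x_2(x_1-x_2+x_3):x_3(x_1+x_2-x_3)]$. $a_1=[0:1:1]$, $a_2=[1:0:1]$, $a_3=[1:1:0]$; $A_i$ is the line through $\{a_1,a_2,a_3\}\setminus\{a_i\}$. $Q=\{\rho=0\}$ with $\rho=x_1^2+x_2^2+x_3^2-2(x_1x_2+x_2x_3+x_3x_1)$, and $\mathcal U=\{[x]\in\mathbb{RP}^2:\rho(x)<0\}$, an open disk in $\mathbb{RP}^2$ with $a_1,a_2,a_3$ on its boundary. *)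

theory Defs
  imports "HOL-Analysis.Analysis"
begin

text \<open>Real projective plane: a point is a line through the origin of real^3,
  represented as the set of nonzero multiples of a nonzero vector.\<close>

definition proj :: "real^3 \<Rightarrow> (real^3) set" where
  "proj x = {c *\<^sub>R x | c. c \<noteq> 0}"

definition RP2 :: "(real^3) set set" where
  "RP2 = proj ` (UNIV - {0})"

definition RP2_top :: "(real^3) set topology" where
  "RP2_top = topology (\<lambda>S. S \<subseteq> RP2 \<and> open {x. x \<noteq> 0 \<and> proj x \<in> S})"

lemma istopology_RP2: "istopology (\<lambda>S. S \<subseteq> RP2 \<and> open {x. x \<noteq> 0 \<and> proj x \<in> S})"
  unfolding istopology_def
proof (rule conjI; intro allI impI)
  fix S T :: "(real^3) set set"
  assume hS: "S \<subseteq> RP2 \<and> open {x. x \<noteq> 0 \<and> proj x \<in> S}"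
     and hT: "T \<subseteq> RP2 \<and> open {x. x \<noteq> 0 \<and> proj x \<in> T}"
  have e: "{x. x \<noteq> 0 \<and> proj x \<in> S \<inter> T} = {x. x \<noteq> 0 \<and> proj x \<in> S} \<inter> {x. x \<noteq> 0 \<and> proj x \<in> T}" by auto
  have "open ({x. x \<noteq> 0 \<and> proj x \<in> S} \<inter> {x. x \<noteq> 0 \<and> proj x \<in> T})"
    using hS hT by (intro open_Int) auto
  then show "S \<inter> T \<subseteq> RP2 \<and> open {x. x \<noteq> 0 \<and> proj x \<in> S \<inter> T}"
    using hS e by auto
next
  fix K :: "(real^3) set set set"
  assume K: "\<forall>S\<in>K. S \<subseteq> RP2 \<and> open {x. x \<noteq> 0 \<and> proj x \<in> S}"
  have "{x. x \<noteq> 0 \<and> proj x \<in> \<Union>K} = (\<Union>S\<in>K. {x. x \<noteq> 0 \<and> proj x \<in> S})" by auto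
  with K show "\<Union>K \<subseteq> RP2 \<and> open {x. x \<noteq> 0 \<and> proj x \<in> \<Union>K}" by auto
qed

lemma openin_RP2_top:
  "openin RP2_top S \<longleftrightarrow> S \<subseteq> RP2 \<and> open {x. x \<noteq> 0 \<and> proj x \<in> S}"
  unfolding RP2_top_def using istopology_RP2 by (simp add: topology_inverse')

text \<open>A polynomial self-map of real^3 (homogeneous) induces a map on RP2.\<close>
definition proj_map :: "(real^3 \<Rightarrow> real^3) \<Rightarrow> (real^3) set \<Rightarrow> (real^3) set" where
  "proj_map F L = proj (F (SOME x. x \<in> L))"

definition g_poly :: "real^3 \<Rightarrow> real^3" where
  "g_poly x = vector [(x$1)^2, (x$2)^2, (x$3)^2]"

definition h_poly :: "real^3 \<Rightarrow> real^3" where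
  "h_poly x = vector [x$1 * (- x$1 + x$2 + x$3), x$2 * (x$1 - x$2 + x$3), x$3 * (x$1 + x$2 - x$3)]"

definition fP :: "(real^3) set \<Rightarrow> (real^3) set" where
  "fP = proj_map g_poly \<circ> proj_map h_poly"

definition a1 :: "(real^3) set" where "a1 = proj (vector [0, 1, 1])"
definition a2 :: "(real^3) set" where "a2 = proj (vector [1, 0, 1])"
definition a3 :: "(real^3) set" where "a3 = proj (vector [1, 1, 0])"

definition proj_line :: "real^3 \<Rightarrow> real^3 \<Rightarrow> (real^3) set set" where
  "proj_line u v = proj ` (span {u, v} - {0})"

definition A1 :: "(real^3) set set" where "A1 = proj_line (vector [1, 0, 1]) (vector [1, 1, 0])"
definition A2 :: "(real^3) set set" where "A2 = proj_line (vector [0, 1, 1]) (vector [1, 1, 0])"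
definition A3 :: "(real^3) set set" where "A3 = proj_line (vector [0, 1, 1]) (vector [1, 0, 1])"

definition rho :: "real^3 \<Rightarrow> real" where
  "rho x = (x$1)^2 + (x$2)^2 + (x$3)^2 - 2 * (x$1 * x$2 + x$2 * x$3 + x$3 * x$1)"

definition U :: "(real^3) set set" where
  "U = {proj x | x. x \<noteq> 0 \<and> rho x < 0}"

definition U0 :: "(real^3) set set" where
  "U0 = {proj (t1 *\<^sub>R vector [0, 1, 1] + t2 *\<^sub>R vector [1, 0, 1] + t3 *\<^sub>R vector [1, 1, 0])
          | t1 t2 t3. t1 > 0 \<and> t2 > 0 \<and> t3 > 0}"

text \<open>U_i: the part of the disk U on the side of A_i opposite to a_i.
  Sides are measured with the affine chart x1+x2+x3 \<noteq> 0, which contains U.\<close>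
definition Ureg :: "(real^3 \<Rightarrow> real) \<Rightarrow> (real^3) set set" where
  "Ureg l = {proj x | x. x \<noteq> 0 \<and> rho x < 0 \<and> l x * (x$1 + x$2 + x$3) < 0}"

definition U1 :: "(real^3) set set" where "U1 = Ureg (\<lambda>x. - x$1 + x$2 + x$3)"
definition U2 :: "(real^3) set set" where "U2 = Ureg (\<lambda>x. x$1 - x$2 + x$3)"
definition U3 :: "(real^3) set set" where "U3 = Ureg (\<lambda>x. x$1 + x$2 - x$3)"

end

theory Submission
  imports Defs
begin



lemma proj_scale: "c \<noteq> 0 \<Longrightarrow> proj (c *\<^sub>R x) = proj x"
  unfolding proj_def
proof (intro set_eqI iffI)
  fix y assume c: "c \<noteq> 0"
  { assume "y \<in> {d *\<^sub>R c *\<^sub>R x |d. d \<noteq> 0}"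
    then obtain d where "d \<noteq> 0" "y = d *\<^sub>R c *\<^sub>R x" by auto
    then show "y \<in> {d *\<^sub>R x |d. d \<noteq> 0}" using c by (auto intro!: exI[of _ "d*c"]) }
  { assume "y \<in> {d *\<^sub>R x |d. d \<noteq> 0}"
    then obtain d where "d \<noteq> 0" "y = d *\<^sub>R x" by auto
    then show "y \<in> {d *\<^sub>R c *\<^sub>R x |d. d \<noteq> 0}" using c by (auto intro!: exI[of _ "d/c"]) }
qed

lemma in_proj: "y \<in> proj x \<longleftrightarrow> (\<exists>c. c \<noteq> 0 \<and> y = c *\<^sub>R x)"
  unfolding proj_def by auto

lemma self_in_proj: "x \<in> proj x"
  unfolding in_proj by (auto intro!: exI[of _ 1])

lemma proj_eq_iff: "proj x = proj y \<longleftrightarrow> (\<exists>c. c \<noteq> 0 \<and> y = c *\<^sub>R x)"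
proof
  assume "proj x = proj y" then show "\<exists>c. c \<noteq> 0 \<and> y = c *\<^sub>R x"
    using self_in_proj[of y] in_proj by metis
next
  assume "\<exists>c. c \<noteq> 0 \<and> y = c *\<^sub>R x" then show "proj x = proj y"
    using proj_scale by metis
qed

lemma proj_map_proj:
  assumes "x \<noteq> 0" "\<And>c. c \<noteq> 0 \<Longrightarrow> proj (F (c *\<^sub>R x)) = proj (F x)"
  shows "proj_map F (proj x) = proj (F x)"
proof -
  have "(SOME y. y \<in> proj x) \<in> proj x" using self_in_proj by (rule someI)
  then obtain c where "c \<noteq> 0" "(SOME y. y \<in> proj x) = c *\<^sub>R x" using in_proj by metis
  then show ?thesis unfolding proj_map_def using assms by simp
qed

lemma proj_in_RP2: "x \<noteq> 0 \<Longrightarrow> proj x \<in> RP2"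
  unfolding RP2_def by auto

lemma topspace_RP2: "topspace RP2_top = RP2"
proof -
  have "openin RP2_top RP2" unfolding openin_RP2_top
  proof
    have "{x. x \<noteq> 0 \<and> proj x \<in> RP2} = - {0}" using proj_in_RP2 by auto
    then show "open {x. x \<noteq> 0 \<and> proj x \<in> RP2}"
      by (metis open_UNIV open_delete Compl_eq_Diff_UNIV)
  qed simp
  then show ?thesis using openin_RP2_top openin_subset openin_topspace
    by (metis subset_antisym)
qed

lemma RP2_elem: "L \<in> RP2 \<Longrightarrow> \<exists>x. x \<noteq> 0 \<and> L = proj x"
  unfolding RP2_def by auto

definition cn :: "(real^3) set set \<Rightarrow> (real^3) set" where
  "cn V = {x. x \<noteq> 0 \<and> proj x \<in> V}"

lemma openin_RP2_cn: "openin RP2_top V \<longleftrightarrow> V \<subseteq> RP2 \<and> open (cn V)"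
  unfolding openin_RP2_top cn_def by simp

lemma cont_induced:
  assumes V: "openin RP2_top V"
    and Fc: "continuous_on (cn V) F"
    and Fnz: "\<And>x. x \<in> cn V \<Longrightarrow> F x \<noteq> 0"
    and Fh: "\<And>x c. x \<in> cn V \<Longrightarrow> c \<noteq> 0 \<Longrightarrow> proj (F (c *\<^sub>R x)) = proj (F x)"
  shows "continuous_map (subtopology RP2_top V) RP2_top (proj_map F)"
proof -
  have VR: "V \<subseteq> RP2" and oC: "open (cn V)" using V openin_RP2_cn by auto
  have pm: "proj_map F (proj x) = proj (F x)" if "x \<in> cn V" for x
    using that Fh by (intro proj_map_proj) (auto simp: cn_def)
  show ?thesis unfolding continuous_map
  proof (intro conjI allI impI)
    show "proj_map F ` topspace (subtopology RP2_top V) \<subseteq> topspace RP2_top"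
    proof
      fix M assume "M \<in> proj_map F ` topspace (subtopology RP2_top V)"
      then obtain L where LL: "M = proj_map F L" "L \<in> topspace (subtopology RP2_top V)" by auto
      then have "L \<in> V" by (simp add: topspace_RP2)
      then obtain x where x: "x \<noteq> 0" "L = proj x" using VR RP2_elem by blast
      then have "x \<in> cn V" using \<open>L \<in> V\<close> by (simp add: cn_def)
      then show "M \<in> topspace RP2_top" using pm Fnz x LL by (simp add: topspace_RP2 proj_in_RP2)
    qed
  next
    fix S assume S: "openin RP2_top S"
    then have oS: "open (cn S)" using openin_RP2_cn by auto
    let ?A = "{L \<in> topspace (subtopology RP2_top V). proj_map F L \<in> S}"
    have A: "?A = {L \<in> V. proj_map F L \<in> S}" using VR by (auto simp: topspace_RP2)
    have "cn ?A = cn V \<inter> F -` cn S"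
    proof (intro set_eqI iffI)
      fix x assume "x \<in> cn ?A"
      then have "x \<in> cn V" "proj (F x) \<in> S" using A pm by (auto simp: cn_def)
      then show "x \<in> cn V \<inter> F -` cn S" using Fnz by (auto simp: cn_def)
    next
      fix x assume "x \<in> cn V \<inter> F -` cn S"
      then show "x \<in> cn ?A" using A pm by (auto simp: cn_def)
    qed
    moreover have "open (cn V \<inter> F -` cn S)"
      using continuous_on_open_vimage[OF oC] Fc oS by (metis Int_commute)
    ultimately have "openin RP2_top ?A" using A VR by (auto simp: openin_RP2_cn)
    then show "openin (subtopology RP2_top V) ?A"
      using V by (auto simp: openin_open_subtopology A)
  qed
qed




lemma vec3_eq: "(u::real^3) = v \<longleftrightarrow> u$1 = v$1 \<and> u$2 = v$2 \<and> u$3 = v$3"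
  by (simp add: vec_eq_iff forall_3)

definition sm :: "real^3 \<Rightarrow> real" where "sm x = x$1 + x$2 + x$3"
definition L1 :: "real^3 \<Rightarrow> real" where "L1 x = - x$1 + x$2 + x$3"
definition L2 :: "real^3 \<Rightarrow> real" where "L2 x = x$1 - x$2 + x$3"
definition L3 :: "real^3 \<Rightarrow> real" where "L3 x = x$1 + x$2 - x$3"

definition fpoly :: "real^3 \<Rightarrow> real^3" where "fpoly x = g_poly (h_poly x)"

definition Gw :: "real^3 \<Rightarrow> real^3" where
  "Gw w = vector [L1 w * L3 w + L1 w * L2 w, L2 w * L3 w + L1 w * L2 w, L2 w * L3 w + L1 w * L3 w]"

definition Gp :: "real \<Rightarrow> real \<Rightarrow> real \<Rightarrow> real^3 \<Rightarrow> real^3" where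
  "Gp e1 e2 e3 z = Gw (vector [e1 * sqrt (z$1), e2 * sqrt (z$2), e3 * sqrt (z$3)])"

lemmas defs3 = sm_def L1_def L2_def L3_def fpoly_def Gw_def Gp_def g_poly_def h_poly_def rho_def

lemma h_scale: "h_poly (c *\<^sub>R x) = (c^2) *\<^sub>R h_poly x"
  by (simp add: vec3_eq h_poly_def power2_eq_square algebra_simps)
lemma g_scale: "g_poly (c *\<^sub>R x) = (c^2) *\<^sub>R g_poly x"
  by (simp add: vec3_eq g_poly_def power2_eq_square algebra_simps)
lemma f_scale: "fpoly (c *\<^sub>R x) = (c^4) *\<^sub>R fpoly x"
  by (simp add: fpoly_def h_scale g_scale power_mult_distrib flip: power_mult)
lemma Gw_scale: "Gw (c *\<^sub>R x) = (c^2) *\<^sub>R Gw x"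
  by (simp add: vec3_eq Gw_def L1_def L2_def L3_def eval_nat_numeral algebra_simps)
lemma Gp_scale: "Gp e1 e2 e3 (c *\<^sub>R z) = ((sqrt c)^2) *\<^sub>R Gp e1 e2 e3 z"
proof -
  have "vector [e1 * sqrt ((c *\<^sub>R z)$1), e2 * sqrt ((c *\<^sub>R z)$2), e3 * sqrt ((c *\<^sub>R z)$3)]
     = sqrt c *\<^sub>R (vector [e1 * sqrt (z$1), e2 * sqrt (z$2), e3 * sqrt (z$3)] :: real^3)"
    by (simp add: vec3_eq real_sqrt_mult)
  then show ?thesis by (simp add: Gp_def Gw_scale)
qed
lemma h_neg: "h_poly (- x) = h_poly x"
  using h_scale[of "-1" x] by simp
lemma Gp_neg: "Gp e1 e2 e3 (- z) = Gp e1 e2 e3 z"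
  using Gp_scale[of e1 e2 e3 "-1" z] by (simp add: real_sqrt_minus)
lemma rho_scale: "rho (c *\<^sub>R x) = c^2 * rho x"
  by (simp add: rho_def power2_eq_square algebra_simps)

lemma id_Lh: "L1 (h_poly x) = L2 x * L3 x" "L2 (h_poly x) = L1 x * L3 x" "L3 (h_poly x) = L1 x * L2 x"
  by (simp_all add: defs3 algebra_simps)
lemma id_rho: "rho x = - (L1 x * L2 x + L2 x * L3 x + L1 x * L3 x)"
  by (simp add: defs3 power2_eq_square algebra_simps)
lemma id_sm: "sm x = L1 x + L2 x + L3 x"
  by (simp add: defs3)
lemma id_rho_g: "rho (g_poly y) = - (sm y * L1 y * L2 y * L3 y)"
  by (simp add: defs3 power2_eq_square algebra_simps)
lemma id_LG: "L1 (Gw w) = 2 * (L2 w * L3 w)" "L2 (Gw w) = 2 * (L1 w * L3 w)" "L3 (Gw w) = 2 * (L1 w * L2 w)"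
  by (simp_all add: defs3 algebra_simps)
lemma id_hG: "h_poly (Gw w) = (4 * (L1 w * L2 w * L3 w)) *\<^sub>R w"
  by (simp add: vec3_eq defs3 algebra_simps)




lemma pos_of_prod_sum: "(x::real)*y > 0 \<Longrightarrow> x+y > 0 \<Longrightarrow> x > 0"
proof (rule ccontr)
  assume h: "x*y>0" "x+y>0" "\<not> x>0"
  then have "x < 0" by (cases "x = 0") auto
  moreover have "y > 0" using h \<open>x<0\<close> by linarith
  ultimately have "x*y < 0" by (simp add: mult_neg_pos)
  then show False using h by simp
qed

lemma RD1: "(a::real)*b+b*c+a*c > 0 \<Longrightarrow> a+b+c \<noteq> 0"
proof
  assume h: "a*b+b*c+a*c > 0" "a+b+c = 0"
  then have c: "c = -a-b" by simp
  have "a*b+b*c+a*c = -((a+b/2)^2 + 3/4*b^2)" by (simp add: c power2_eq_square algebra_simps)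
  moreover have "(a+b/2)^2 + 3/4*b^2 \<ge> 0" by simp
  ultimately show False using h by linarith
qed

lemma RD2a: assumes "(a::real)*b+b*c+a*c > 0" "a*(a+b+c) < 0" shows "b*c > 0"
proof -
  have "a*b+b*c+a*c = a*(a+b+c) - a^2 + b*c" by (simp add: power2_eq_square algebra_simps)
  moreover have "a^2 \<ge> 0" by simp
  ultimately show ?thesis using assms by linarith
qed

lemma RD2: assumes "(a::real)*b+b*c+a*c > 0" "a*(a+b+c) < 0" shows "b*(a+b+c) > 0"
proof -
  let ?s = "a+b+c"
  have bc: "b*c > 0" using RD2a assms by blast
  have s: "?s \<noteq> 0" using RD1 assms by blast
  have "(b*?s)*(c*?s) = (b*c)*(?s*?s)" by (simp add: algebra_simps)
  moreover have "?s*?s > 0" using s by (metis not_real_square_gt_zero)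
  ultimately have "(b*?s)*(c*?s) > 0" using bc by (metis mult_pos_pos)
  moreover have "b*?s + c*?s = ?s*?s - a*?s" by (simp add: algebra_simps)
  ultimately show ?thesis using pos_of_prod_sum[of "b*?s" "c*?s"] \<open>?s*?s>0\<close> assms(2) by linarith
qed

lemma RS1: assumes "(a::real)*b+b*c+a*c > 0" "a*(a+b+c) < 0"
  shows "0 < -(b+c)*a" "0 < (a+c)*b" "0 < (a+b)*c"
proof -
  let ?s = "a+b+c"
  have bs: "b*?s > 0" using RD2 assms by blast
  have cs: "c*?s > 0" using RD2[of a c b] assms by (simp add: algebra_simps)
  have "-(b+c)*a = a^2 - a*?s" by (simp add: power2_eq_square algebra_simps)
  moreover have "a^2 \<ge> 0" by simp
  ultimately show "0 < -(b+c)*a" using assms by linarith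
  have "(a*?s)*(c*?s) < 0" using assms(2) cs by (simp add: mult_neg_pos)
  then have "(a*c)*(?s*?s) < 0" by (simp add: algebra_simps)
  then have ac: "a*c < 0" by (metis mult_less_0_iff not_square_less_zero)
  have "(a*?s)*(b*?s) < 0" using assms(2) bs by (simp add: mult_neg_pos)
  then have "(a*b)*(?s*?s) < 0" by (simp add: algebra_simps)
  then have ab: "a*b < 0" by (metis mult_less_0_iff not_square_less_zero)
  have "(a+c)*b = (a*b+b*c+a*c) - a*c" by (simp add: algebra_simps)
  then show "0 < (a+c)*b" using assms(1) ac by linarith
  have "(a+b)*c = (a*b+b*c+a*c) - a*b" by (simp add: algebra_simps)
  then show "0 < (a+b)*c" using assms(1) ab by linarith
qed

lemma RS0: assumes "0 < a*((a::real)+b+c)" "0 < b*(a+b+c)" "0 < c*(a+b+c)"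
  shows "0 < (b+c)*a" "0 < (a+c)*b" "0 < (a+b)*c"
proof -
  let ?s = "a+b+c"
  have "(a*?s)*(b*?s) > 0" "(a*?s)*(c*?s) > 0" "(b*?s)*(c*?s) > 0" using assms by simp_all
  then have "(a*b)*(?s*?s) > 0" "(a*c)*(?s*?s) > 0" "(b*c)*(?s*?s) > 0" by (simp_all add: algebra_simps)
  then have "a*b > 0" "a*c>0" "b*c>0" by (metis mult_pos_pos zero_less_mult_iff not_square_less_zero)+
  then show "0 < (b+c)*a" "0 < (a+c)*b" "0 < (a+b)*c" by (simp_all add: algebra_simps)
qed

lemma RC1: assumes "(p1::real) > 0" "p2 < 0" "p3 < 0" "p2*p3 + p1*(p2+p3) < 0" "p1+p2+p3 > 0"
  shows "(p2*p3)*(p1*p3) + (p1*p3)*(p1*p2) + (p2*p3)*(p1*p2) > 0"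
    and "(p2*p3)*((p2*p3)+(p1*p3)+(p1*p2)) < 0"
proof -
  have "(p2*p3)*(p1*p3) + (p1*p3)*(p1*p2) + (p2*p3)*(p1*p2) = (p1*(p2*p3))*(p1+p2+p3)"
    by (simp add: algebra_simps)
  moreover have "p2*p3 > 0" using assms by (simp add: mult_neg_neg)
  ultimately show "(p2*p3)*(p1*p3) + (p1*p3)*(p1*p2) + (p2*p3)*(p1*p2) > 0" using assms by simp
  show "(p2*p3)*((p2*p3)+(p1*p3)+(p1*p2)) < 0"
  proof -
    have "p2 * p3 + p1 * p3 + p1 * p2 < 0" using assms(4) by (simp add: algebra_simps)
    from mult_pos_neg[OF \<open>p2*p3>0\<close> this] show ?thesis .
  qed
qed

lemma RC0: assumes "(p1::real) > 0" "p2 > 0" "p3 > 0"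
  shows "(p2*p3)*(p1*p3) + (p1*p3)*(p1*p2) + (p2*p3)*(p1*p2) > 0"
    and "(p2*p3)*((p2*p3)+(p1*p3)+(p1*p2)) > 0"
    and "(p1*p3)*((p2*p3)+(p1*p3)+(p1*p2)) > 0"
    and "(p1*p2)*((p2*p3)+(p1*p3)+(p1*p2)) > 0"
  using assms by (simp_all add: add_pos_pos)

lemma Rpos3: assumes "(x::real)*y*w > 0" "x+y>0" "y+w>0" "x+w>0" shows "x>0 \<and> y>0 \<and> w>0"
proof -
  have "\<not> (x \<le> 0)"
  proof
    assume "x \<le> 0"
    then have "x < 0" using assms(1) by (cases "x=0") auto
    then have "y > 0" "w > 0" using assms by linarith+
    then have "x*y*w < 0" using \<open>x<0\<close> by (simp add: mult_neg_pos)
    then show False using assms by simp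
  qed
  moreover have "\<not> (y \<le> 0)"
  proof
    assume "y \<le> 0"
    then have "y < 0" using assms(1) by (cases "y=0") auto
    then have "x > 0" "w > 0" using assms by linarith+
    then have "x*y*w < 0" using \<open>y<0\<close> by (simp add: mult_pos_neg mult_neg_pos)
    then show False using assms by simp
  qed
  moreover have "\<not> (w \<le> 0)"
  proof
    assume "w \<le> 0"
    then have "w < 0" using assms(1) by (cases "w=0") auto
    then have "x > 0" "y > 0" using assms by linarith+
    then have "x*y*w < 0" using \<open>w<0\<close> by (simp add: mult_pos_neg)
    then show False using assms by simp
  qed
  ultimately show ?thesis by simp
qed




definition pset :: "(real^3 \<Rightarrow> bool) \<Rightarrow> (real^3) set set" where
  "pset P = proj ` {x. x \<noteq> 0 \<and> P x}"
definition scinv :: "(real^3 \<Rightarrow> bool) \<Rightarrow> bool" where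
  "scinv P = (\<forall>x c. c \<noteq> 0 \<longrightarrow> P (c *\<^sub>R x) = P x)"

lemma pset_mem: assumes "scinv P" "x \<noteq> 0" shows "proj x \<in> pset P \<longleftrightarrow> P x"
proof
  assume "proj x \<in> pset P"
  then obtain y where y: "y \<noteq> 0" "P y" "proj x = proj y" by (auto simp: pset_def)
  then obtain c where "c \<noteq> 0" "x = c *\<^sub>R y" using proj_eq_iff by metis
  then show "P x" using assms y unfolding scinv_def by auto
qed (use assms in \<open>auto simp: pset_def\<close>)

lemma cn_pset: "scinv P \<Longrightarrow> cn (pset P) = {x. x \<noteq> 0 \<and> P x}"
  using pset_mem unfolding cn_def by auto

lemma pset_sub: "pset P \<subseteq> RP2"
  using proj_in_RP2 unfolding pset_def by auto

lemma pset_open: "scinv P \<Longrightarrow> open {x. x \<noteq> 0 \<and> P x} \<Longrightarrow> openin RP2_top (pset P)"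
  by (simp add: openin_RP2_cn cn_pset pset_sub)

lemma L_scale: "L1 (c *\<^sub>R x) = c * L1 x" "L2 (c *\<^sub>R x) = c * L2 x" "L3 (c *\<^sub>R x) = c * L3 x"
  "sm (c *\<^sub>R x) = c * sm x"
  by (simp_all add: L1_def L2_def L3_def sm_def algebra_simps)

lemma sq_pos_iff: "c \<noteq> 0 \<Longrightarrow> (0 < c^2 * (a::real) \<longleftrightarrow> 0 < a) \<and> (c^2 * a < 0 \<longleftrightarrow> a < 0) \<and> (c^2*a = 0 \<longleftrightarrow> a = 0)"
  by (simp add: zero_less_mult_iff mult_less_0_iff)

lemma Lsm_scale: "L1 (c *\<^sub>R x) * sm (c *\<^sub>R x) = c^2 * (L1 x * sm x)"
   "L2 (c *\<^sub>R x) * sm (c *\<^sub>R x) = c^2 * (L2 x * sm x)"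
   "L3 (c *\<^sub>R x) * sm (c *\<^sub>R x) = c^2 * (L3 x * sm x)"
  by (simp_all add: L_scale power2_eq_square algebra_simps)

definition Prho where "Prho x = (rho x < 0)"
definition P0 where "P0 x = (rho x < 0 \<and> 0 < L1 x * sm x \<and> 0 < L2 x * sm x \<and> 0 < L3 x * sm x)"
definition P1 where "P1 x = (rho x < 0 \<and> L1 x * sm x < 0)"
definition P2 where "P2 x = (rho x < 0 \<and> L2 x * sm x < 0)"
definition P3 where "P3 x = (rho x < 0 \<and> L3 x * sm x < 0)"
definition PX where "PX x = (rho x < 0 \<and> L1 x \<noteq> 0 \<and> L2 x \<noteq> 0 \<and> L3 x \<noteq> 0)"

lemma scinv_all: "scinv Prho" "scinv P0" "scinv P1" "scinv P2" "scinv P3" "scinv PX"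
  unfolding scinv_def Prho_def P0_def P1_def P2_def P3_def
  apply (auto simp only: rho_scale Lsm_scale sq_pos_iff)
  unfolding PX_def by (auto simp: rho_scale L_scale sq_pos_iff)

lemma open_all: "open {x. x \<noteq> 0 \<and> Prho x}" "open {x. x \<noteq> 0 \<and> P0 x}" "open {x. x \<noteq> 0 \<and> P1 x}"
  "open {x. x \<noteq> 0 \<and> P2 x}" "open {x. x \<noteq> 0 \<and> P3 x}"
  unfolding Prho_def P0_def P1_def P2_def P3_def rho_def L1_def L2_def L3_def sm_def
  by (intro open_Collect_conj open_Collect_less open_Collect_neq continuous_intros; simp)+

lemma U_eq: "U = pset Prho"
  unfolding U_def pset_def Prho_def by auto
lemma U1_eq: "U1 = pset P1"
  unfolding U1_def Ureg_def pset_def P1_def L1_def sm_def by auto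
lemma U2_eq: "U2 = pset P2"
  unfolding U2_def Ureg_def pset_def P2_def L2_def sm_def by auto
lemma U3_eq: "U3 = pset P3"
  unfolding U3_def Ureg_def pset_def P3_def L3_def sm_def by auto




lemma Mt_comp: "(t1 *\<^sub>R vector [0, 1, 1] + t2 *\<^sub>R vector [1, 0, 1] + t3 *\<^sub>R vector [1, 1, 0] :: real^3)
   = vector [t2 + t3, t1 + t3, t1 + t2]"
  by (simp add: vec3_eq)

lemma P0_pos: assumes "x \<noteq> 0" "P0 x" "sm x > 0"
  shows "x = (L1 x / 2) *\<^sub>R vector [0, 1, 1] + (L2 x / 2) *\<^sub>R vector [1, 0, 1] + (L3 x / 2) *\<^sub>R vector [1, 1, 0]"
    "L1 x > 0" "L2 x > 0" "L3 x > 0"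
proof -
  show "x = (L1 x / 2) *\<^sub>R vector [0, 1, 1] + (L2 x / 2) *\<^sub>R vector [1, 0, 1] + (L3 x / 2) *\<^sub>R vector [1, 1, 0]"
    unfolding Mt_comp by (simp add: vec3_eq L1_def L2_def L3_def field_simps)
  show "L1 x > 0" "L2 x > 0" "L3 x > 0" using assms unfolding P0_def by (auto simp: zero_less_mult_iff)
qed

lemma U0_eq: "U0 = pset P0"
proof (intro set_eqI iffI)
  fix L assume "L \<in> U0"
  then obtain t1 t2 t3 where t: "t1 > 0" "t2 > 0" "t3 > 0"
    and L: "L = proj (vector [t2 + t3, t1 + t3, t1 + t2])" unfolding U0_def Mt_comp by auto
  let ?x = "vector [t2 + t3, t1 + t3, t1 + t2] :: real^3"
  have nz: "?x \<noteq> 0" using t by (auto simp: vec3_eq)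
  have "L1 ?x = 2*t1" "L2 ?x = 2*t2" "L3 ?x = 2*t3" "sm ?x = 2*(t1+t2+t3)"
    by (simp_all add: L1_def L2_def L3_def sm_def)
  moreover have "rho ?x = - 4 * (t1*t2) - 4*(t2*t3) - 4*(t1*t3)"
    by (simp add: rho_def power2_eq_square algebra_simps)
  moreover have "t1*t2>0" "t2*t3>0" "t1*t3>0" using t by simp_all
  ultimately have "rho ?x < 0" by linarith
  with \<open>L1 ?x = 2*t1\<close> \<open>L2 ?x = 2*t2\<close> \<open>L3 ?x = 2*t3\<close> \<open>sm ?x = 2*(t1+t2+t3)\<close>
  have "P0 ?x" using t unfolding P0_def by (simp add: add_pos_pos)
  then show "L \<in> pset P0" using L nz by (auto simp: pset_def)
next
  fix L assume "L \<in> pset P0"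
  then obtain x where x: "x \<noteq> 0" "P0 x" "L = proj x" by (auto simp: pset_def)
  have "sm x \<noteq> 0" using x unfolding P0_def by auto
  then obtain y where y: "y \<noteq> 0" "P0 y" "L = proj y" "sm y > 0"
  proof (cases "sm x > 0")
    case True then show ?thesis using x that by blast
  next
    case False
    then have "sm ((-1) *\<^sub>R x) > 0" using \<open>sm x \<noteq> 0\<close> by (simp only: L_scale; simp)
    moreover have "P0 ((-1) *\<^sub>R x)" using scinv_all(2) x(2) unfolding scinv_def by (metis neg_equal_0_iff_equal one_neq_zero)
    moreover have "L = proj ((-1) *\<^sub>R x)" using x proj_scale[of "-1" x] by simp
    ultimately show ?thesis using x that by (metis neg_equal_0_iff_equal scaleR_minus1_left)
  qed
  note P = P0_pos[OF y(1,2,4)]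
  have e: "L = proj ((L1 y / 2) *\<^sub>R vector [0, 1, 1] + (L2 y / 2) *\<^sub>R vector [1, 0, 1] + (L3 y / 2) *\<^sub>R vector [1, 1, 0])"
    using P(1) y(3) by metis
  have "L1 y / 2 > 0" "L2 y/2>0" "L3 y/2>0" using P by simp_all
  then show "L \<in> U0" unfolding U0_def using e by blast
qed

lemma span_lines:
  "span {vector [1, 0, 1], vector [1, 1, 0]} = {x :: real^3. L1 x = 0}"
  "span {vector [0, 1, 1], vector [1, 1, 0]} = {x :: real^3. L2 x = 0}"
  "span {vector [0, 1, 1], vector [1, 0, 1]} = {x :: real^3. L3 x = 0}"
proof -
  have sp: "span {u, v} = {x. \<exists>a b. x = a *\<^sub>R u + b *\<^sub>R v}" for u v :: "real^3"
    unfolding span_insert span_singleton by (auto simp: algebra_simps)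
  show "span {vector [1, 0, 1], vector [1, 1, 0]} = {x :: real^3. L1 x = 0}"
    unfolding sp
    by (auto simp: vec3_eq L1_def intro!: exI[of _ "x$3" for x] exI[of _ "x$2" for x])
  show "span {vector [0, 1, 1], vector [1, 1, 0]} = {x :: real^3. L2 x = 0}"
    unfolding sp
    by (auto simp: vec3_eq L2_def intro!: exI[of _ "x$3" for x] exI[of _ "x$1" for x])
  show "span {vector [0, 1, 1], vector [1, 0, 1]} = {x :: real^3. L3 x = 0}"
    unfolding sp
    by (auto simp: vec3_eq L3_def intro!: exI[of _ "x$2" for x] exI[of _ "x$1" for x])
qed

lemma A_eq: "A1 = pset (\<lambda>x. L1 x = 0)" "A2 = pset (\<lambda>x. L2 x = 0)" "A3 = pset (\<lambda>x. L3 x = 0)"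
  unfolding A1_def A2_def A3_def proj_line_def span_lines pset_def by auto

lemma scinv_L: "scinv (\<lambda>x. L1 x = 0)" "scinv (\<lambda>x. L2 x = 0)" "scinv (\<lambda>x. L3 x = 0)"
  unfolding scinv_def by (auto simp: L_scale)

lemma X_eq: "U - (A1 \<union> A2 \<union> A3) = pset PX"
proof (intro set_eqI iffI)
  fix L assume L: "L \<in> U - (A1 \<union> A2 \<union> A3)"
  then obtain x where x: "x \<noteq> 0" "L = proj x" unfolding U_eq pset_def by auto
  then show "L \<in> pset PX" using L pset_mem[OF scinv_all(1)] pset_mem[OF scinv_all(6)]
      pset_mem[OF scinv_L(1)] pset_mem[OF scinv_L(2)] pset_mem[OF scinv_L(3)]
    unfolding U_eq A_eq PX_def Prho_def by auto
next
  fix L assume L: "L \<in> pset PX"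
  then obtain x where x: "x \<noteq> 0" "L = proj x" unfolding pset_def by auto
  then show "L \<in> U - (A1 \<union> A2 \<union> A3)" using L pset_mem[OF scinv_all(1)] pset_mem[OF scinv_all(6)]
      pset_mem[OF scinv_L(1)] pset_mem[OF scinv_L(2)] pset_mem[OF scinv_L(3)]
    unfolding U_eq A_eq PX_def Prho_def by auto
qed

lemma e2_pos: "rho x < 0 \<Longrightarrow> L1 x * L2 x + L2 x * L3 x + L1 x * L3 x > 0"
  using id_rho[of x] by linarith

lemma decomp: assumes "PX x" shows "P0 x \<or> P1 x \<or> P2 x \<or> P3 x"
proof -
  have r: "rho x < 0" and n: "L1 x \<noteq> 0" "L2 x \<noteq> 0" "L3 x \<noteq> 0" using assms by (auto simp: PX_def)
  have "sm x \<noteq> 0" using RD1[OF e2_pos[OF r]] id_sm[of x] by simp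
  then have "L1 x * sm x \<noteq> 0" "L2 x * sm x \<noteq> 0" "L3 x * sm x \<noteq> 0" using n by simp_all
  then show ?thesis using r unfolding P0_def P1_def P2_def P3_def by linarith
qed

lemma disj12: "P1 x \<Longrightarrow> \<not> P2 x" "P1 x \<Longrightarrow> \<not> P3 x" "P2 x \<Longrightarrow> \<not> P3 x"
proof -
  assume "P1 x"
  then have r: "rho x < 0" "L1 x * (L1 x + L2 x + L3 x) < 0" by (auto simp: P1_def id_sm)
  have e: "L1 x * L2 x + L2 x * L3 x + L1 x * L3 x > 0" using e2_pos[OF r(1)] .
  have "L2 x * (L1 x + L2 x + L3 x) > 0" using RD2[OF e r(2)] .
  then show "\<not> P2 x" by (auto simp: P2_def id_sm)
  have "L3 x * (L1 x + L3 x + L2 x) > 0" using RD2[of "L1 x" "L3 x" "L2 x"] e r(2) by (simp add: algebra_simps)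
  then show "\<not> P3 x" by (auto simp: P3_def id_sm algebra_simps)
next
  assume "P2 x"
  then have r: "rho x < 0" "L2 x * (L2 x + L1 x + L3 x) < 0" by (auto simp: P2_def id_sm algebra_simps)
  have e: "L2 x * L1 x + L1 x * L3 x + L2 x * L3 x > 0" using e2_pos[OF r(1)] by (simp add: algebra_simps)
  have "L3 x * (L2 x + L1 x + L3 x) > 0" using RD2[of "L2 x" "L3 x" "L1 x"] e r(2) by (simp add: algebra_simps)
  then show "\<not> P3 x" by (auto simp: P3_def id_sm algebra_simps)
qed




lemma rho_zero: "rho 0 = 0" by (simp add: rho_def)

lemma proj_homog: assumes "x \<noteq> 0" "\<And>c. c \<noteq> 0 \<Longrightarrow> \<exists>k. k \<noteq> 0 \<and> F (c *\<^sub>R x) = k *\<^sub>R F x"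
  shows "proj_map F (proj x) = proj (F x)"
proof (rule proj_map_proj[OF assms(1)])
  fix c :: real assume "c \<noteq> 0"
  then obtain k where "k \<noteq> 0" "F (c *\<^sub>R x) = k *\<^sub>R F x" using assms(2) by blast
  then show "proj (F (c *\<^sub>R x)) = proj (F x)" by (simp add: proj_scale)
qed

lemma fpoly_homog: "c \<noteq> 0 \<Longrightarrow> \<exists>k. k \<noteq> 0 \<and> fpoly (c *\<^sub>R x) = k *\<^sub>R fpoly x"
  by (intro exI[of _ "c^4"]) (simp add: f_scale)

lemma fP_proj: assumes "x \<noteq> 0" "h_poly x \<noteq> 0" shows "fP (proj x) = proj (fpoly x)"
proof -
  have "proj_map h_poly (proj x) = proj (h_poly x)"
    using assms(1) by (rule proj_homog) (rule_tac x="c^2" in exI, simp add: h_scale)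
  moreover have "proj_map g_poly (proj (h_poly x)) = proj (g_poly (h_poly x))"
    using assms(2) by (rule proj_homog) (rule_tac x="c^2" in exI, simp add: g_scale)
  ultimately show ?thesis by (simp add: fP_def fpoly_def)
qed

lemma cont_fpoly: "continuous_on S fpoly"
proof -
  have *: "fpoly = (\<lambda>x. \<chi> i. fpoly x $ i)" by simp
  show ?thesis
    apply (subst *)
    apply (rule continuous_on_vec_lambda)
    subgoal for i
      using exhaust_3[of i]
      apply (elim disjE)
      apply (simp_all add: fpoly_def g_poly_def h_poly_def)
      apply (intro continuous_intros)+
      done
    done
qed

lemma cont_Gp: "continuous_on S (Gp e1 e2 e3)"
proof -
  have *: "Gp e1 e2 e3 = (\<lambda>x. \<chi> i. Gp e1 e2 e3 x $ i)" by simp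
  show ?thesis
    apply (subst *)
    apply (rule continuous_on_vec_lambda)
    subgoal for i
      using exhaust_3[of i]
      apply (elim disjE)
      apply (simp_all add: Gp_def Gw_def L1_def L2_def L3_def)
      apply (intro continuous_intros)+
      done
    done
qed

lemma Gp_homog: "c \<noteq> 0 \<Longrightarrow> \<exists>k. k \<noteq> 0 \<and> Gp e1 e2 e3 (c *\<^sub>R z) = k *\<^sub>R Gp e1 e2 e3 z"
  by (intro exI[of _ "(sqrt c)^2"]) (simp add: Gp_scale)

lemma homeo_generic:
  assumes P: "scinv P" "open {x. x \<noteq> 0 \<and> P x}"
    and fw: "\<And>x. x \<noteq> 0 \<Longrightarrow> P x \<Longrightarrow> h_poly x \<noteq> 0 \<and> rho (fpoly x) < 0 \<and> (\<exists>k. k \<noteq> 0 \<and> G (fpoly x) = k *\<^sub>R x)"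
    and bw: "\<And>z. z \<noteq> 0 \<Longrightarrow> rho z < 0 \<Longrightarrow> G z \<noteq> 0 \<and> P (G z) \<and> h_poly (G z) \<noteq> 0 \<and> (\<exists>k. k \<noteq> 0 \<and> fpoly (G z) = k *\<^sub>R z)"
    and Gc: "continuous_on UNIV G"
    and Gh: "\<And>c z. c \<noteq> 0 \<Longrightarrow> \<exists>k. k \<noteq> 0 \<and> G (c *\<^sub>R z) = k *\<^sub>R G z"
  shows "homeomorphic_map (subtopology RP2_top (pset P)) (subtopology RP2_top U) fP"
  unfolding homeomorphic_map_maps
proof (intro exI[of _ "proj_map G"])
  let ?V = "pset P"
  have oV: "openin RP2_top ?V" using pset_open P by blast
  have oU: "openin RP2_top U" using pset_open[OF scinv_all(1) open_all(1)] U_eq by simp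
  have cV: "cn ?V = {x. x \<noteq> 0 \<and> P x}" using cn_pset P by blast
  have cU: "cn U = {x. x \<noteq> 0 \<and> rho x < 0}" using cn_pset[OF scinv_all(1)] U_eq by (simp add: Prho_def)
  have fnz: "fpoly x \<noteq> 0" if "x \<noteq> 0" "P x" for x using fw[OF that] rho_zero by (metis less_irrefl)
  have memV: "proj x \<in> ?V \<longleftrightarrow> P x" if "x \<noteq> 0" for x using pset_mem[OF P(1) that] .
  have memU: "proj x \<in> U \<longleftrightarrow> rho x < 0" if "x \<noteq> 0" for x
    using pset_mem[OF scinv_all(1) that] U_eq by (simp add: Prho_def)
  have VR: "?V \<subseteq> RP2" "U \<subseteq> RP2" using pset_sub[of P] pset_sub[of Prho] U_eq by simp_all
  have fPeq: "fP L = proj_map fpoly L" if LV: "L \<in> ?V" for L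
  proof -
    obtain x where x: "x \<noteq> 0" "P x" "L = proj x" using LV unfolding pset_def by blast
    have h: "h_poly x \<noteq> 0" using fw[OF x(1,2)] by blast
    have "fP L = proj (fpoly x)" using fP_proj[OF x(1) h] x(3) by simp
    moreover have "proj_map fpoly L = proj (fpoly x)" using proj_homog[of x fpoly, OF x(1) fpoly_homog] x(3) by simp
    ultimately show ?thesis by simp
  qed
  have c1: "continuous_map (subtopology RP2_top ?V) RP2_top (proj_map fpoly)"
    by (rule cont_induced[OF oV]) (auto simp: cV cont_fpoly fnz f_scale proj_scale)
  have tV: "topspace (subtopology RP2_top ?V) = ?V" and tU: "topspace (subtopology RP2_top U) = U"
    using VR by (auto simp: topspace_RP2)
  have c1': "continuous_map (subtopology RP2_top ?V) RP2_top fP"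
  proof (rule continuous_map_eq[OF c1])
    fix L assume "L \<in> topspace (subtopology RP2_top ?V)"
    then have "L \<in> ?V" using tV by simp
    then show "proj_map fpoly L = fP L" using fPeq by simp
  qed
  have c2: "continuous_map (subtopology RP2_top U) RP2_top (proj_map G)"
  proof (rule cont_induced[OF oU])
    show "continuous_on (cn U) G" using Gc continuous_on_subset by blast
    show "G x \<noteq> 0" if "x \<in> cn U" for x using bw that cU by auto
    show "proj (G (c *\<^sub>R x)) = proj (G x)" if "c \<noteq> 0" for x c
      using Gh[OF that, of x] by (auto simp: proj_scale)
  qed
  have imf: "fP L \<in> U" if LV: "L \<in> ?V" for L
  proof -
    obtain x where x: "x \<noteq> 0" "P x" "L = proj x" using LV unfolding pset_def by blast
    have h: "h_poly x \<noteq> 0" and r: "rho (fpoly x) < 0" using fw[OF x(1,2)] by blast+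
    have "fP L = proj (fpoly x)" using fP_proj[OF x(1) h] x(3) by simp
    then show ?thesis using memU[OF fnz[OF x(1,2)]] r by simp
  qed
  have img: "proj_map G L \<in> ?V" and inv2: "fP (proj_map G L) = L" if LU: "L \<in> U" for L
  proof -
    obtain z where z: "z \<noteq> 0" "rho z < 0" "L = proj z" using LU by (auto simp: U_eq pset_def Prho_def)
    have pg: "proj_map G L = proj (G z)" using proj_homog[of z G, OF z(1) Gh] z(3) by simp
    note b = bw[OF z(1,2)]
    show "proj_map G L \<in> ?V" using pg b memV by simp
    obtain k where k: "k \<noteq> 0" "fpoly (G z) = k *\<^sub>R z" using b by blast
    have "fP (proj (G z)) = proj (fpoly (G z))" using fP_proj[of "G z"] b by blast
    then show "fP (proj_map G L) = L" using pg k z(3) by (simp add: proj_scale)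
  qed
  have inv1: "proj_map G (fP L) = L" if LV: "L \<in> ?V" for L
  proof -
    obtain x where x: "x \<noteq> 0" "P x" "L = proj x" using LV unfolding pset_def by blast
    obtain k where k: "k \<noteq> 0" "G (fpoly x) = k *\<^sub>R x" using fw[OF x(1,2)] by blast
    have h: "h_poly x \<noteq> 0" using fw[OF x(1,2)] by blast
    have "fP L = proj (fpoly x)" using fP_proj[OF x(1) h] x(3) by simp
    moreover have "proj_map G (proj (fpoly x)) = proj (G (fpoly x))" using proj_homog[of "fpoly x" G, OF fnz[OF x(1,2)] Gh] by blast
    ultimately show ?thesis using k x(3) by (simp add: proj_scale)
  qed
  show "homeomorphic_maps (subtopology RP2_top ?V) (subtopology RP2_top U) fP (proj_map G)"
    unfolding homeomorphic_maps_def
  proof (intro conjI)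
    show "continuous_map (subtopology RP2_top ?V) (subtopology RP2_top U) fP"
      using c1' imf by (auto simp: continuous_map_in_subtopology tV)
    show "continuous_map (subtopology RP2_top U) (subtopology RP2_top ?V) (proj_map G)"
      using c2 img by (auto simp: continuous_map_in_subtopology tU)
  qed (use inv1 inv2 tU tV in auto)
qed




lemma h_comp: "h_poly x $ 1 = (L2 x + L3 x) * L1 x / 2" "h_poly x $ 2 = (L1 x + L3 x) * L2 x / 2"
  "h_poly x $ 3 = (L1 x + L2 x) * L3 x / 2"
  by (simp_all add: h_poly_def L1_def L2_def L3_def algebra_simps)

lemma id_Gh: "Gw (h_poly x) = (2 * (L1 x * L2 x * L3 x)) *\<^sub>R x"
  by (simp add: vec3_eq Gw_def id_Lh) (simp add: L1_def L2_def L3_def algebra_simps)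

lemma L_zero: "L1 0 = 0" by (simp add: L1_def)

lemma sgn_fix: assumes "e^2 = (1::real)" "e * a > 0" shows "e * sqrt (a^2) = a"
proof -
  have "e = 1 \<or> e = -1" using assms(1) by (simp add: power2_eq_1_iff)
  then show ?thesis using assms(2) by (auto simp: real_sqrt_abs)
qed

lemma fw_gen:
  assumes x: "rho x < 0" "L1 x \<noteq> 0" "L2 x \<noteq> 0" "L3 x \<noteq> 0"
    and e: "e1^2 = 1" "e2^2 = 1" "e3^2 = 1"
    and s: "e1 * h_poly x $ 1 > 0" "e2 * h_poly x $ 2 > 0" "e3 * h_poly x $ 3 > 0"
  shows "h_poly x \<noteq> 0 \<and> rho (fpoly x) < 0 \<and> (\<exists>k. k \<noteq> 0 \<and> Gp e1 e2 e3 (fpoly x) = k *\<^sub>R x)"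
proof (intro conjI)
  let ?y = "h_poly x"
  show "?y \<noteq> 0"
  proof
    assume "?y = 0"
    then have "L1 ?y = 0" by (simp add: L_zero)
    then show False using id_Lh(1)[of x] x by simp
  qed
  have sy: "sm ?y > 0" using e2_pos[OF x(1)] by (simp add: id_sm id_Lh algebra_simps)
  have pr: "L1 ?y * L2 ?y * L3 ?y = (L1 x * L2 x * L3 x)^2" by (simp add: id_Lh power2_eq_square algebra_simps)
  have "L1 x * L2 x * L3 x \<noteq> 0" using x by simp
  then have "L1 ?y * L2 ?y * L3 ?y > 0" using pr by simp
  then have "sm ?y * L1 ?y * L2 ?y * L3 ?y > 0" using sy by (metis mult.assoc mult_pos_pos)
  then show "rho (fpoly x) < 0" by (simp add: fpoly_def id_rho_g)
  have "vector [e1 * sqrt (fpoly x $ 1), e2 * sqrt (fpoly x $ 2), e3 * sqrt (fpoly x $ 3)] = ?y"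
    using sgn_fix[OF e(1) s(1)] sgn_fix[OF e(2) s(2)] sgn_fix[OF e(3) s(3)]
    by (simp add: vec3_eq fpoly_def g_poly_def)
  then have "Gp e1 e2 e3 (fpoly x) = (2 * (L1 x * L2 x * L3 x)) *\<^sub>R x" by (simp add: Gp_def id_Gh)
  moreover have "2 * (L1 x * L2 x * L3 x) \<noteq> 0" using x by simp
  ultimately show "\<exists>k. k \<noteq> 0 \<and> Gp e1 e2 e3 (fpoly x) = k *\<^sub>R x" by blast
qed

lemma fw0: "x \<noteq> 0 \<Longrightarrow> P0 x \<Longrightarrow> h_poly x \<noteq> 0 \<and> rho (fpoly x) < 0 \<and> (\<exists>k. k \<noteq> 0 \<and> Gp 1 1 1 (fpoly x) = k *\<^sub>R x)"
proof -
  assume "P0 x"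
  then have r: "rho x < 0" and a: "0 < L1 x * (L1 x + L2 x + L3 x)" "0 < L2 x * (L1 x + L2 x + L3 x)" "0 < L3 x * (L1 x + L2 x + L3 x)"
    by (auto simp: P0_def id_sm)
  note R = RS0[OF a]
  have n: "L1 x \<noteq> 0" "L2 x \<noteq> 0" "L3 x \<noteq> 0" using a by auto
  show ?thesis by (rule fw_gen[OF r n]) (use R in \<open>simp_all add: h_comp algebra_simps\<close>)
qed

lemma fw1: "x \<noteq> 0 \<Longrightarrow> P1 x \<Longrightarrow> h_poly x \<noteq> 0 \<and> rho (fpoly x) < 0 \<and> (\<exists>k. k \<noteq> 0 \<and> Gp (-1) 1 1 (fpoly x) = k *\<^sub>R x)"
proof -
  assume "P1 x"
  then have r: "rho x < 0" and a: "L1 x * (L1 x + L2 x + L3 x) < 0"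
    by (auto simp: P1_def id_sm)
  note R = RS1[OF e2_pos[OF r] a]
  have n: "L1 x \<noteq> 0" "L2 x \<noteq> 0" "L3 x \<noteq> 0" using R by auto
  show ?thesis by (rule fw_gen[OF r n]) (use R in \<open>simp_all add: h_comp algebra_simps\<close>)
qed

lemma fw2: "x \<noteq> 0 \<Longrightarrow> P2 x \<Longrightarrow> h_poly x \<noteq> 0 \<and> rho (fpoly x) < 0 \<and> (\<exists>k. k \<noteq> 0 \<and> Gp 1 (-1) 1 (fpoly x) = k *\<^sub>R x)"
proof -
  assume "P2 x"
  then have r: "rho x < 0" and a: "L2 x * (L2 x + L1 x + L3 x) < 0"
    by (auto simp: P2_def id_sm algebra_simps)
  have e: "L2 x * L1 x + L1 x * L3 x + L2 x * L3 x > 0" using e2_pos[OF r] by (simp add: algebra_simps)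
  note R = RS1[OF e a]
  have n: "L1 x \<noteq> 0" "L2 x \<noteq> 0" "L3 x \<noteq> 0" using R by auto
  show ?thesis by (rule fw_gen[OF r n]) (use R in \<open>simp_all add: h_comp algebra_simps\<close>)
qed

lemma fw3: "x \<noteq> 0 \<Longrightarrow> P3 x \<Longrightarrow> h_poly x \<noteq> 0 \<and> rho (fpoly x) < 0 \<and> (\<exists>k. k \<noteq> 0 \<and> Gp 1 1 (-1) (fpoly x) = k *\<^sub>R x)"
proof -
  assume "P3 x"
  then have r: "rho x < 0" and a: "L3 x * (L3 x + L1 x + L2 x) < 0"
    by (auto simp: P3_def id_sm algebra_simps)
  have e: "L3 x * L1 x + L1 x * L2 x + L3 x * L2 x > 0" using e2_pos[OF r] by (simp add: algebra_simps)
  note R = RS1[OF e a]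
  have n: "L1 x \<noteq> 0" "L2 x \<noteq> 0" "L3 x \<noteq> 0" using R by auto
  show ?thesis by (rule fw_gen[OF r n]) (use R in \<open>simp_all add: h_comp algebra_simps\<close>)
qed




lemma RE: assumes "(a::real) > 0" "b > 0" "c > 0" shows "(a-b+c)*(a+b-c) < 2*a*(a+b+c)"
proof -
  have "2*a*(a+b+c) - (a-b+c)*(a+b-c) = a^2 + (b-c)^2 + 2*a*b + 2*a*c"
    by (simp add: power2_eq_square algebra_simps)
  moreover have "a^2 + (b-c)^2 + 2*a*b + 2*a*c > 0" using assms by (simp add: add_pos_nonneg)
  ultimately show ?thesis by linarith
qed

lemma z_sign: assumes "rho z < 0"
  shows "(z$1 > 0 \<and> z$2 > 0 \<and> z$3 > 0) \<or> (z$1 < 0 \<and> z$2 < 0 \<and> z$3 < 0)"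
proof -
  have "rho z = (z$1+z$2-z$3)^2 - 4*(z$1*z$2)" "rho z = (z$1+z$3-z$2)^2 - 4*(z$1*z$3)"
    "rho z = (z$2+z$3-z$1)^2 - 4*(z$2*z$3)"
    by (simp_all add: rho_def power2_eq_square algebra_simps)
  moreover have "(z$1+z$2-z$3)^2 \<ge> 0" "(z$1+z$3-z$2)^2 \<ge> 0" "(z$2+z$3-z$1)^2 \<ge> 0" by simp_all
  ultimately have "z$1*z$2 > 0" "z$1*z$3 > 0" "z$2*z$3 > 0" using assms by linarith+
  then show ?thesis by (auto simp: zero_less_mult_iff)
qed

lemma upos: assumes z: "z$1 > 0" "z$2 > 0" "z$3 > 0" "rho z < 0"
  defines "u \<equiv> vector [sqrt (z$1), sqrt (z$2), sqrt (z$3)] :: real^3"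
  shows "u$1 > 0" "u$2 > 0" "u$3 > 0" "L1 u > 0" "L2 u > 0" "L3 u > 0"
proof -
  show u: "u$1 > 0" "u$2 > 0" "u$3 > 0" using z by (simp_all add: u_def)
  have "g_poly u = z" using z by (simp add: vec3_eq g_poly_def u_def)
  then have "sm u * L1 u * L2 u * L3 u > 0" using id_rho_g[of u] z(4) by simp
  moreover have "sm u > 0" using u by (simp add: sm_def)
  ultimately have "L1 u * L2 u * L3 u > 0" by (simp add: zero_less_mult_iff mult.assoc)
  moreover have "L1 u + L2 u > 0" "L2 u + L3 u > 0" "L1 u + L3 u > 0" using u by (simp_all add: L1_def L2_def L3_def)
  ultimately show "L1 u > 0" "L2 u > 0" "L3 u > 0" using Rpos3 by blast+
qed

lemma PG: "rho (Gw w) = -4*((L2 w*L3 w)*(L1 w*L3 w) + (L1 w*L3 w)*(L1 w*L2 w) + (L2 w*L3 w)*(L1 w*L2 w))"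
  "L1 (Gw w) * sm (Gw w) = 4 * (L2 w*L3 w) * ((L2 w*L3 w) + (L1 w*L3 w) + (L1 w*L2 w))"
  "L2 (Gw w) * sm (Gw w) = 4 * (L1 w*L3 w) * ((L2 w*L3 w) + (L1 w*L3 w) + (L1 w*L2 w))"
  "L3 (Gw w) * sm (Gw w) = 4 * (L1 w*L2 w) * ((L2 w*L3 w) + (L1 w*L3 w) + (L1 w*L2 w))"
  by (simp_all add: id_rho[of "Gw w"] id_sm[of "Gw w"] id_LG algebra_simps)

lemma bw_common:
  assumes z: "z$1 > 0" "z$2 > 0" "z$3 > 0"
    and e: "e1^2 = 1" "e2^2 = 1" "e3^2 = 1"
    and w: "w = vector [e1 * sqrt (z$1), e2 * sqrt (z$2), e3 * sqrt (z$3)]"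
    and P: "L1 w * L2 w * L3 w \<noteq> 0"
  shows "Gp e1 e2 e3 z = Gw w" "Gw w \<noteq> 0" "h_poly (Gw w) \<noteq> 0"
    "\<exists>k. k \<noteq> 0 \<and> fpoly (Gw w) = k *\<^sub>R z"
proof -
  show "Gp e1 e2 e3 z = Gw w" by (simp add: Gp_def w)
  show "Gw w \<noteq> 0"
  proof
    assume "Gw w = 0"
    then have "L1 (Gw w) = 0" by (simp add: L_zero)
    then show False using id_LG(1)[of w] P by simp
  qed
  have en: "e1 \<noteq> 0" using e(1) by auto
  have wn: "w \<noteq> 0"
  proof
    assume "w = 0" then have "w$1 = 0" by simp
    then show False using w en z(1) by simp
  qed
  show "h_poly (Gw w) \<noteq> 0" using id_hG[of w] P wn by simp
  have gw: "g_poly w = z"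
    using z e by (simp add: vec3_eq g_poly_def w power_mult_distrib)
  have "fpoly (Gw w) = ((4 * (L1 w * L2 w * L3 w))^2) *\<^sub>R z"
    by (simp add: fpoly_def id_hG g_scale gw)
  moreover have "(4 * (L1 w * L2 w * L3 w))^2 \<noteq> 0" using P by simp
  ultimately show "\<exists>k. k \<noteq> 0 \<and> fpoly (Gw w) = k *\<^sub>R z" by blast
qed

lemma bw_lift:
  assumes pos: "\<And>z. z$1 > 0 \<Longrightarrow> z$2 > 0 \<Longrightarrow> z$3 > 0 \<Longrightarrow> rho z < 0 \<Longrightarrow>
      Q (Gp e1 e2 e3 z) \<and> (\<exists>k. k \<noteq> 0 \<and> fpoly (Gp e1 e2 e3 z) = k *\<^sub>R z)"
    and z: "rho z < 0"
  shows "Q (Gp e1 e2 e3 z) \<and> (\<exists>k. k \<noteq> 0 \<and> fpoly (Gp e1 e2 e3 z) = k *\<^sub>R z)"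
proof -
  consider "z$1 > 0 \<and> z$2 > 0 \<and> z$3 > 0" | "z$1 < 0 \<and> z$2 < 0 \<and> z$3 < 0" using z_sign[OF z] by blast
  then show ?thesis
  proof cases
    case 1 then show ?thesis using pos z by blast
  next
    case 2
    have r: "rho (-z) < 0" using z rho_scale[of "-1" z] by simp
    have "Q (Gp e1 e2 e3 (-z)) \<and> (\<exists>k. k \<noteq> 0 \<and> fpoly (Gp e1 e2 e3 (-z)) = k *\<^sub>R (-z))"
      using pos[OF _ _ _ r] 2 by simp
    then obtain k where "Q (Gp e1 e2 e3 z)" "k \<noteq> 0" "fpoly (Gp e1 e2 e3 z) = (-k) *\<^sub>R z"
      by (auto simp: Gp_neg)
    then show ?thesis by (metis neg_equal_0_iff_equal)
  qed
qed




lemma bw0: assumes "z \<noteq> 0" "rho z < 0"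
  shows "Gp 1 1 1 z \<noteq> 0 \<and> P0 (Gp 1 1 1 z) \<and> h_poly (Gp 1 1 1 z) \<noteq> 0 \<and> (\<exists>k. k \<noteq> 0 \<and> fpoly (Gp 1 1 1 z) = k *\<^sub>R z)"
proof -
  have "(\<lambda>v. v \<noteq> 0 \<and> P0 v \<and> h_poly v \<noteq> 0) (Gp 1 1 1 z) \<and> (\<exists>k. k \<noteq> 0 \<and> fpoly (Gp 1 1 1 z) = k *\<^sub>R z)"
  proof (rule bw_lift[OF _ assms(2)])
    fix z :: "real^3" assume z: "z$1 > 0" "z$2 > 0" "z$3 > 0" "rho z < 0"
    note U = upos[OF z]
    define w where "w = (vector [1 * sqrt (z$1), 1 * sqrt (z$2), 1 * sqrt (z$3)] :: real^3)"
    have p: "L1 w > 0" "L2 w > 0" "L3 w > 0" using U(4-6) by (simp_all add: w_def L1_def L2_def L3_def)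
    then have Pn: "L1 w * L2 w * L3 w \<noteq> 0" by simp
    note C = bw_common[OF z(1-3) _ _ _ w_def Pn]
    note RR = RC0[OF p]
    have "rho (Gw w) < 0" using RR(1) by (simp add: PG)
    moreover have "0 < L1 (Gw w) * sm (Gw w)" "0 < L2 (Gw w) * sm (Gw w)" "0 < L3 (Gw w) * sm (Gw w)"
      using RR(2-4) by (simp_all only: PG)
    ultimately have "P0 (Gw w)" by (simp add: P0_def)
    then show "(\<lambda>v. v \<noteq> 0 \<and> P0 v \<and> h_poly v \<noteq> 0) (Gp 1 1 1 z) \<and> (\<exists>k. k \<noteq> 0 \<and> fpoly (Gp 1 1 1 z) = k *\<^sub>R z)"
      using C by simp
  qed
  then show ?thesis by simp
qed

lemma bw1: assumes "z \<noteq> 0" "rho z < 0"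
  shows "Gp (-1) 1 1 z \<noteq> 0 \<and> P1 (Gp (-1) 1 1 z) \<and> h_poly (Gp (-1) 1 1 z) \<noteq> 0 \<and> (\<exists>k. k \<noteq> 0 \<and> fpoly (Gp (-1) 1 1 z) = k *\<^sub>R z)"
proof -
  have "(\<lambda>v. v \<noteq> 0 \<and> P1 v \<and> h_poly v \<noteq> 0) (Gp (-1) 1 1 z) \<and> (\<exists>k. k \<noteq> 0 \<and> fpoly (Gp (-1) 1 1 z) = k *\<^sub>R z)"
  proof (rule bw_lift[OF _ assms(2)])
    fix z :: "real^3" assume z: "z$1 > 0" "z$2 > 0" "z$3 > 0" "rho z < 0"
    note U = upos[OF z]
    define a where "a = sqrt (z$1)"
    define b where "b = sqrt (z$2)"
    define c where "c = sqrt (z$3)"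
    have abc: "a > 0" "b > 0" "c > 0" "-a+b+c > 0" "a-b+c > 0" "a+b-c > 0"
      using U by (simp_all add: a_def b_def c_def L1_def L2_def L3_def)
    define w where "w = (vector [-1 * sqrt (z$1), 1 * sqrt (z$2), 1 * sqrt (z$3)] :: real^3)"
    have Lw: "L1 w = a+b+c" "L2 w = -(a+b-c)" "L3 w = -(a-b+c)"
      by (simp_all add: w_def L1_def L2_def L3_def a_def b_def c_def)
    have p: "L1 w > 0" "L2 w < 0" "L3 w < 0" "L2 w * L3 w + L1 w * (L2 w + L3 w) < 0" "L1 w + L2 w + L3 w > 0"
      using abc RE[of a b c] by (simp_all add: Lw algebra_simps)
    then have Pn: "L1 w * L2 w * L3 w \<noteq> 0" by simp
    note C = bw_common[OF z(1-3) _ _ _ w_def Pn]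
    note RR = RC1[OF p]
    have "rho (Gw w) < 0" using RR(1) by (simp add: PG)
    moreover have "L1 (Gw w) * sm (Gw w) < 0"
      using RR(2) by (simp only: PG)
    ultimately have "P1 (Gw w)" by (simp add: P1_def)
    then show "(\<lambda>v. v \<noteq> 0 \<and> P1 v \<and> h_poly v \<noteq> 0) (Gp (-1) 1 1 z) \<and> (\<exists>k. k \<noteq> 0 \<and> fpoly (Gp (-1) 1 1 z) = k *\<^sub>R z)"
      using C by simp
  qed
  then show ?thesis by simp
qed

lemma bw2: assumes "z \<noteq> 0" "rho z < 0"
  shows "Gp 1 (-1) 1 z \<noteq> 0 \<and> P2 (Gp 1 (-1) 1 z) \<and> h_poly (Gp 1 (-1) 1 z) \<noteq> 0 \<and> (\<exists>k. k \<noteq> 0 \<and> fpoly (Gp 1 (-1) 1 z) = k *\<^sub>R z)"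
proof -
  have "(\<lambda>v. v \<noteq> 0 \<and> P2 v \<and> h_poly v \<noteq> 0) (Gp 1 (-1) 1 z) \<and> (\<exists>k. k \<noteq> 0 \<and> fpoly (Gp 1 (-1) 1 z) = k *\<^sub>R z)"
  proof (rule bw_lift[OF _ assms(2)])
    fix z :: "real^3" assume z: "z$1 > 0" "z$2 > 0" "z$3 > 0" "rho z < 0"
    note U = upos[OF z]
    define a where "a = sqrt (z$1)"
    define b where "b = sqrt (z$2)"
    define c where "c = sqrt (z$3)"
    have abc: "a > 0" "b > 0" "c > 0" "-a+b+c > 0" "a-b+c > 0" "a+b-c > 0"
      using U by (simp_all add: a_def b_def c_def L1_def L2_def L3_def)
    define w where "w = (vector [1 * sqrt (z$1), -1 * sqrt (z$2), 1 * sqrt (z$3)] :: real^3)"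
    have Lw: "L1 w = -(a+b-c)" "L2 w = a+b+c" "L3 w = -(-a+b+c)"
      by (simp_all add: w_def L1_def L2_def L3_def a_def b_def c_def)
    have p: "L2 w > 0" "L1 w < 0" "L3 w < 0" "L1 w * L3 w + L2 w * (L1 w + L3 w) < 0" "L2 w + L1 w + L3 w > 0"
      using abc RE[of b a c] by (simp_all add: Lw algebra_simps)
    then have Pn: "L1 w * L2 w * L3 w \<noteq> 0" by simp
    note C = bw_common[OF z(1-3) _ _ _ w_def Pn]
    note RR = RC1[OF p]
    have "rho (Gw w) < 0" using RR(1) by (simp add: PG algebra_simps)
    moreover have "L2 (Gw w) * sm (Gw w) < 0"
      using RR(2) by (simp add: PG algebra_simps)
    ultimately have "P2 (Gw w)" by (simp add: P2_def)
    then show "(\<lambda>v. v \<noteq> 0 \<and> P2 v \<and> h_poly v \<noteq> 0) (Gp 1 (-1) 1 z) \<and> (\<exists>k. k \<noteq> 0 \<and> fpoly (Gp 1 (-1) 1 z) = k *\<^sub>R z)"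
      using C by simp
  qed
  then show ?thesis by simp
qed

lemma bw3: assumes "z \<noteq> 0" "rho z < 0"
  shows "Gp 1 1 (-1) z \<noteq> 0 \<and> P3 (Gp 1 1 (-1) z) \<and> h_poly (Gp 1 1 (-1) z) \<noteq> 0 \<and> (\<exists>k. k \<noteq> 0 \<and> fpoly (Gp 1 1 (-1) z) = k *\<^sub>R z)"
proof -
  have "(\<lambda>v. v \<noteq> 0 \<and> P3 v \<and> h_poly v \<noteq> 0) (Gp 1 1 (-1) z) \<and> (\<exists>k. k \<noteq> 0 \<and> fpoly (Gp 1 1 (-1) z) = k *\<^sub>R z)"
  proof (rule bw_lift[OF _ assms(2)])
    fix z :: "real^3" assume z: "z$1 > 0" "z$2 > 0" "z$3 > 0" "rho z < 0"
    note U = upos[OF z]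
    define a where "a = sqrt (z$1)"
    define b where "b = sqrt (z$2)"
    define c where "c = sqrt (z$3)"
    have abc: "a > 0" "b > 0" "c > 0" "-a+b+c > 0" "a-b+c > 0" "a+b-c > 0"
      using U by (simp_all add: a_def b_def c_def L1_def L2_def L3_def)
    define w where "w = (vector [1 * sqrt (z$1), 1 * sqrt (z$2), -1 * sqrt (z$3)] :: real^3)"
    have Lw: "L1 w = -(a-b+c)" "L2 w = -(-a+b+c)" "L3 w = a+b+c"
      by (simp_all add: w_def L1_def L2_def L3_def a_def b_def c_def)
    have p: "L3 w > 0" "L1 w < 0" "L2 w < 0" "L1 w * L2 w + L3 w * (L1 w + L2 w) < 0" "L3 w + L1 w + L2 w > 0"
      using abc RE[of c a b] by (simp_all add: Lw algebra_simps)
    then have Pn: "L1 w * L2 w * L3 w \<noteq> 0" by simp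
    note C = bw_common[OF z(1-3) _ _ _ w_def Pn]
    note RR = RC1[OF p]
    have "rho (Gw w) < 0" using RR(1) by (simp add: PG algebra_simps)
    moreover have "L3 (Gw w) * sm (Gw w) < 0"
      using RR(2) by (simp add: PG algebra_simps)
    ultimately have "P3 (Gw w)" by (simp add: P3_def)
    then show "(\<lambda>v. v \<noteq> 0 \<and> P3 v \<and> h_poly v \<noteq> 0) (Gp 1 1 (-1) z) \<and> (\<exists>k. k \<noteq> 0 \<and> fpoly (Gp 1 1 (-1) z) = k *\<^sub>R z)"
      using C by simp
  qed
  then show ?thesis by simp
qed




lemma comps_eq:
  assumes cov: "\<Union>F = topspace Y" and disj: "pairwise disjnt F"
    and ne: "\<And>C. C \<in> F \<Longrightarrow> C \<noteq> {}" and con: "\<And>C. C \<in> F \<Longrightarrow> connectedin Y C"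
    and op: "\<And>C. C \<in> F \<Longrightarrow> openin Y C"
  shows "connected_components_of Y = F"
proof -
  have cl: "closedin Y C" if "C \<in> F" for C
  proof -
    have "topspace Y - C = \<Union>(F - {C})"
      using disj that unfolding cov[symmetric] pairwise_def disjnt_def by auto
    moreover have "openin Y (\<Union>(F - {C}))" using op by (intro openin_Union) auto
    moreover have "C \<subseteq> topspace Y" using cov that by auto
    ultimately show ?thesis unfolding closedin_def by simp
  qed
  have comp: "connected_component_of_set Y x = C" if "C \<in> F" "x \<in> C" for C x
  proof
    show "C \<subseteq> connected_component_of_set Y x"
      using connected_component_of_maximal[OF con[OF that(1)] that(2)] .
    have xt: "x \<in> topspace Y" using cov that by auto
    have "connected_component_of_set Y x \<subseteq> C \<or> disjnt (connected_component_of_set Y x) C"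
      using connectedin_clopen_cases[OF connectedin_connected_component_of cl[OF that(1)] op[OF that(1)]] .
    moreover have "x \<in> connected_component_of_set Y x" using xt by (simp add: connected_component_of_refl)
    ultimately show "connected_component_of_set Y x \<subseteq> C" using that(2) by (auto simp: disjnt_def)
  qed
  show ?thesis unfolding connected_components_of_def
  proof
    show "connected_component_of_set Y ` topspace Y \<subseteq> F"
    proof
      fix K assume "K \<in> connected_component_of_set Y ` topspace Y"
      then obtain x where "x \<in> topspace Y" "K = connected_component_of_set Y x" by blast
      then obtain C where "C \<in> F" "x \<in> C" using cov by blast
      then show "K \<in> F" using comp \<open>K = _\<close> by simp
    qed
    show "F \<subseteq> connected_component_of_set Y ` topspace Y"
    proof
      fix C assume C: "C \<in> F"
      then obtain x where "x \<in> C" using ne by blast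
      then show "C \<in> connected_component_of_set Y ` topspace Y"
        using comp[OF C] cov C by blast
    qed
  qed
qed


lemma pset_disj: assumes "scinv P" "scinv Q" "\<And>x. P x \<Longrightarrow> \<not> Q x" shows "disjnt (pset P) (pset Q)"
  using assms pset_mem unfolding disjnt_def pset_def by fastforce

lemma P_other: "P1 x \<Longrightarrow> L2 x \<noteq> 0 \<and> L3 x \<noteq> 0" "P2 x \<Longrightarrow> L1 x \<noteq> 0 \<and> L3 x \<noteq> 0" "P3 x \<Longrightarrow> L1 x \<noteq> 0 \<and> L2 x \<noteq> 0"
proof -
  assume "P1 x"
  then have r: "rho x < 0" and a: "L1 x * (L1 x + L2 x + L3 x) < 0" by (auto simp: P1_def id_sm)
  show "L2 x \<noteq> 0 \<and> L3 x \<noteq> 0" using RS1[OF e2_pos[OF r] a] by auto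
next
  assume "P2 x"
  then have r: "rho x < 0" and a: "L2 x * (L2 x + L1 x + L3 x) < 0" by (auto simp: P2_def id_sm algebra_simps)
  have e: "L2 x * L1 x + L1 x * L3 x + L2 x * L3 x > 0" using e2_pos[OF r] by (simp add: algebra_simps)
  show "L1 x \<noteq> 0 \<and> L3 x \<noteq> 0" using RS1[OF e a] by auto
next
  assume "P3 x"
  then have r: "rho x < 0" and a: "L3 x * (L3 x + L1 x + L2 x) < 0" by (auto simp: P3_def id_sm algebra_simps)
  have e: "L3 x * L1 x + L1 x * L2 x + L3 x * L2 x > 0" using e2_pos[OF r] by (simp add: algebra_simps)
  show "L1 x \<noteq> 0 \<and> L2 x \<noteq> 0" using RS1[OF e a] by auto
qed

lemma Pj_PX: "P0 x \<Longrightarrow> PX x" "P1 x \<Longrightarrow> PX x" "P2 x \<Longrightarrow> PX x" "P3 x \<Longrightarrow> PX x"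
  using P_other by (auto simp: P0_def P1_def P2_def P3_def PX_def)

lemma pset_mono: "(\<And>x. P x \<Longrightarrow> Q x) \<Longrightarrow> pset P \<subseteq> pset Q"
  unfolding pset_def by auto

lemma homeos:
  "homeomorphic_map (subtopology RP2_top U0) (subtopology RP2_top U) fP"
  "homeomorphic_map (subtopology RP2_top U1) (subtopology RP2_top U) fP"
  "homeomorphic_map (subtopology RP2_top U2) (subtopology RP2_top U) fP"
  "homeomorphic_map (subtopology RP2_top U3) (subtopology RP2_top U) fP"
  unfolding U0_eq U1_eq U2_eq U3_eq
  subgoal by (rule homeo_generic[where P=P0 and G="Gp 1 1 1", OF scinv_all(2) open_all(2) fw0 bw0 cont_Gp Gp_homog])
  subgoal by (rule homeo_generic[where P=P1 and G="Gp (-1) 1 1", OF scinv_all(3) open_all(3) fw1 bw1 cont_Gp Gp_homog])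
  subgoal by (rule homeo_generic[where P=P2 and G="Gp 1 (-1) 1", OF scinv_all(4) open_all(4) fw2 bw2 cont_Gp Gp_homog])
  subgoal by (rule homeo_generic[where P=P3 and G="Gp 1 1 (-1)", OF scinv_all(5) open_all(5) fw3 bw3 cont_Gp Gp_homog])
  done




lemma L_inner: "L1 x = inner (vector [-1,1,1] :: real^3) x" "L2 x = inner (vector [1,-1,1] :: real^3) x"
  "L3 x = inner (vector [1,1,-1] :: real^3) x"
  by (simp_all add: inner_vec_def sum_3 L1_def L2_def L3_def)

definition K0 :: "(real^3) set" where "K0 = {x. 0 < L1 x \<and> 0 < L2 x \<and> 0 < L3 x}"

lemma K0_convex: "convex K0"
proof -
  have "K0 = {x. inner (vector [-1,1,1] :: real^3) x > 0} \<inter> {x. inner (vector [1,-1,1] :: real^3) x > 0}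
     \<inter> {x. inner (vector [1,1,-1] :: real^3) x > 0}"
    unfolding K0_def L_inner by auto
  then show ?thesis by (metis convex_Int convex_halfspace_gt)
qed

lemma K0_nz: "x \<in> K0 \<Longrightarrow> x \<noteq> 0"
  by (auto simp: K0_def L1_def)

lemma U0_K0: "U0 = proj ` K0"
proof (intro set_eqI iffI)
  fix L assume "L \<in> U0"
  then obtain t1 t2 t3 where t: "t1 > 0" "t2 > 0" "t3 > 0"
    and L: "L = proj (vector [t2 + t3, t1 + t3, t1 + t2])" unfolding U0_def Mt_comp by auto
  have "vector [t2 + t3, t1 + t3, t1 + t2] \<in> K0" using t by (simp add: K0_def L1_def L2_def L3_def)
  then show "L \<in> proj ` K0" using L by blast
next
  fix L assume "L \<in> proj ` K0"
  then obtain x where x: "x \<in> K0" "L = proj x" by blast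
  have e: "x = (L1 x / 2) *\<^sub>R vector [0, 1, 1] + (L2 x / 2) *\<^sub>R vector [1, 0, 1] + (L3 x / 2) *\<^sub>R vector [1, 1, 0]"
    unfolding Mt_comp by (simp add: vec3_eq L1_def L2_def L3_def field_simps)
  have "L1 x / 2 > 0" "L2 x / 2 > 0" "L3 x / 2 > 0" using x by (simp_all add: K0_def)
  moreover have "L = proj ((L1 x / 2) *\<^sub>R vector [0, 1, 1] + (L2 x / 2) *\<^sub>R vector [1, 0, 1] + (L3 x / 2) *\<^sub>R vector [1, 1, 0])"
    using e x(2) by metis
  ultimately show "L \<in> U0" unfolding U0_def by blast
qed

lemma proj_cont_K0: "continuous_map (top_of_set K0) RP2_top proj"
  unfolding continuous_map
proof (intro conjI allI impI)
  show "proj ` topspace (top_of_set K0) \<subseteq> topspace RP2_top"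
    using K0_nz proj_in_RP2 by (auto simp: topspace_RP2)
  fix S assume "openin RP2_top S"
  then have o: "open (cn S)" by (simp add: openin_RP2_cn)
  have "{x \<in> topspace (top_of_set K0). proj x \<in> S} = K0 \<inter> cn S"
    using K0_nz by (auto simp: cn_def)
  then show "openin (top_of_set K0) {x \<in> topspace (top_of_set K0). proj x \<in> S}"
    using o by (auto simp: openin_open)
qed

lemma U0_connected: "connectedin RP2_top U0"
proof -
  have "connectedin (top_of_set K0) K0"
    using convex_connected[OF K0_convex] by (simp add: connectedin_subtopology)
  from connectedin_continuous_map_image[OF proj_cont_K0 this] show ?thesis by (simp add: U0_K0)
qed

lemma U_sub: "U \<subseteq> RP2" "U0 \<subseteq> RP2" "U1 \<subseteq> RP2" "U2 \<subseteq> RP2" "U3 \<subseteq> RP2"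
  by (simp_all add: U_eq U0_eq U1_eq U2_eq U3_eq pset_sub)

lemma all_connected: "connectedin RP2_top U0" "connectedin RP2_top U1" "connectedin RP2_top U2" "connectedin RP2_top U3"
proof -
  have c0: "connected_space (subtopology RP2_top U0)" using U0_connected by (simp add: connectedin_def)
  have cU: "connected_space (subtopology RP2_top U)"
    using homeomorphic_connected_space[OF homeomorphic_map_imp_homeomorphic_space[OF homeos(1)]] c0 by simp
  have "connected_space (subtopology RP2_top U1)" "connected_space (subtopology RP2_top U2)" "connected_space (subtopology RP2_top U3)"
    using homeomorphic_connected_space[OF homeomorphic_map_imp_homeomorphic_space[OF homeos(2)]]
      homeomorphic_connected_space[OF homeomorphic_map_imp_homeomorphic_space[OF homeos(3)]]
      homeomorphic_connected_space[OF homeomorphic_map_imp_homeomorphic_space[OF homeos(4)]] cU by simp_all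
  then show "connectedin RP2_top U1" "connectedin RP2_top U2" "connectedin RP2_top U3"
    using U_sub by (simp_all add: connectedin_def topspace_RP2)
  show "connectedin RP2_top U0" by (rule U0_connected)
qed

lemma U_ne: "U \<noteq> {}"
proof -
  have "rho (vector [1,1,1] :: real^3) < 0" by (simp add: rho_def)
  moreover have "(vector [1,1,1] :: real^3) \<noteq> 0" by (simp add: vec3_eq)
  ultimately have "proj (vector [1,1,1]) \<in> U" using pset_mem[OF scinv_all(1)] by (simp add: U_eq Prho_def)
  then show ?thesis by blast
qed

lemma ne_from_homeo: assumes "homeomorphic_map (subtopology RP2_top V) (subtopology RP2_top U) fP" "V \<subseteq> RP2"
  shows "V \<noteq> {}"
proof -
  have "fP ` topspace (subtopology RP2_top V) = topspace (subtopology RP2_top U)"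
    using homeomorphic_imp_surjective_map[OF assms(1)] .
  then have "fP ` V = U" using assms(2) U_sub(1) by (simp add: topspace_RP2 Int_absorb1 Int_absorb2)
  then show ?thesis using U_ne by auto
qed

lemma all_ne: "U0 \<noteq> {}" "U1 \<noteq> {}" "U2 \<noteq> {}" "U3 \<noteq> {}"
  using ne_from_homeo[OF homeos(1) U_sub(2)] ne_from_homeo[OF homeos(2) U_sub(3)]
    ne_from_homeo[OF homeos(3) U_sub(4)] ne_from_homeo[OF homeos(4) U_sub(5)] by auto

lemma all_disj: "disjnt U0 U1" "disjnt U0 U2" "disjnt U0 U3" "disjnt U1 U2" "disjnt U1 U3" "disjnt U2 U3"
  unfolding U0_eq U1_eq U2_eq U3_eq
  subgoal by (rule pset_disj[OF scinv_all(2) scinv_all(3)]) (auto simp: P0_def P1_def)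
  subgoal by (rule pset_disj[OF scinv_all(2) scinv_all(4)]) (auto simp: P0_def P2_def)
  subgoal by (rule pset_disj[OF scinv_all(2) scinv_all(5)]) (auto simp: P0_def P3_def)
  subgoal by (rule pset_disj[OF scinv_all(3) scinv_all(4)]) (rule disj12(1))
  subgoal by (rule pset_disj[OF scinv_all(3) scinv_all(5)]) (rule disj12(2))
  subgoal by (rule pset_disj[OF scinv_all(4) scinv_all(5)]) (rule disj12(3))
  done

lemma X_union: "U - (A1 \<union> A2 \<union> A3) = U0 \<union> U1 \<union> U2 \<union> U3"
proof
  show "U - (A1 \<union> A2 \<union> A3) \<subseteq> U0 \<union> U1 \<union> U2 \<union> U3"
  proof
    fix L assume "L \<in> U - (A1 \<union> A2 \<union> A3)"
    then obtain x where x: "x \<noteq> 0" "PX x" "L = proj x" unfolding X_eq pset_def by blast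
    then show "L \<in> U0 \<union> U1 \<union> U2 \<union> U3" using decomp[OF x(2)]
      unfolding U0_eq U1_eq U2_eq U3_eq pset_def by blast
  qed
  show "U0 \<union> U1 \<union> U2 \<union> U3 \<subseteq> U - (A1 \<union> A2 \<union> A3)"
    unfolding X_eq U0_eq U1_eq U2_eq U3_eq
    using pset_mono[of P0 PX] pset_mono[of P1 PX] pset_mono[of P2 PX] pset_mono[of P3 PX] Pj_PX by blast
qed

theorem mainTheorem17:
  shows "connected_components_of (subtopology RP2_top (U - (A1 \<union> A2 \<union> A3))) = {U0, U1, U2, U3}
    \<and> card {U0, U1, U2, U3} = 4
    \<and> (\<forall>V \<in> {U0, U1, U2, U3}.
          homeomorphic_map (subtopology RP2_top V) (subtopology RP2_top U) fP)"
proof (intro conjI)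
  let ?X = "U - (A1 \<union> A2 \<union> A3)"
  let ?Y = "subtopology RP2_top ?X"
  have XR: "?X \<subseteq> RP2" using U_sub(1) by blast
  have tY: "topspace ?Y = U0 \<union> U1 \<union> U2 \<union> U3" using XR X_union by (simp add: topspace_RP2 Int_absorb1)
  have sub: "V \<subseteq> ?X" if "V \<in> {U0, U1, U2, U3}" for V using that X_union by auto
  have oj: "openin RP2_top U0" "openin RP2_top U1" "openin RP2_top U2" "openin RP2_top U3"
    unfolding U0_eq U1_eq U2_eq U3_eq
    by (rule pset_open[OF scinv_all(2) open_all(2)], rule pset_open[OF scinv_all(3) open_all(3)],
        rule pset_open[OF scinv_all(4) open_all(4)], rule pset_open[OF scinv_all(5) open_all(5)])
  show "connected_components_of ?Y = {U0, U1, U2, U3}"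
  proof (rule comps_eq)
    show "\<Union>{U0, U1, U2, U3} = topspace ?Y" using tY by auto
    show "pairwise disjnt {U0, U1, U2, U3}"
      using all_disj unfolding pairwise_def by (auto simp: disjnt_sym)
    show "C \<noteq> {}" if "C \<in> {U0, U1, U2, U3}" for C using that all_ne by auto
    show "connectedin ?Y C" if "C \<in> {U0, U1, U2, U3}" for C
      using that all_connected sub[OF that] by (auto simp: connectedin_subtopology)
    show "openin ?Y C" if "C \<in> {U0, U1, U2, U3}" for C
    proof -
      have "openin RP2_top C" using that oj by auto
      moreover have "C = C \<inter> ?X" using sub[OF that] by blast
      ultimately show ?thesis unfolding openin_subtopology by blast
    qed
  qed
  have d: "U0 \<noteq> U1" "U0 \<noteq> U2" "U0 \<noteq> U3" "U1 \<noteq> U2" "U1 \<noteq> U3" "U2 \<noteq> U3"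
    using all_disj all_ne by (auto simp: disjnt_def)
  then show "card {U0, U1, U2, U3} = 4" by simp
  show "\<forall>V\<in>{U0, U1, U2, U3}. homeomorphic_map (subtopology RP2_top V) (subtopology RP2_top U) fP"
    using homeos by auto
qed



end
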